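(* In the setting of the context, assume $\mathbf{A}$ and $\tilde{\mathbf{A}}$ are invertible. Then the coarse-grid correction of PFASST satisfies the approximation property for large CFL number: there exist $\mu^*>0$ and a constant $c>0$ independent of $\mu$ such that for all $\mu\ge\mu^*$, $$\big\|\mathbf{C}^{-1}-\mathbf{T}_C^F\tilde{\mathbf{P}}^{-1}\mathbf{T}_F^C\big\|\le\frac{c}{\mu}.$$
   Context: Fix positive integers $L,M,N$ and coarse sizes $\tilde M\le M$, $\tilde N\le N$. Let $\mathbf{Q}=(q_{m,j})\in\mathbb{R}^{M\times M}$ with $q_{m,j}=\int_0^{\tau_m}\ell_j(s)\,ds$ be the collocation matrix for the (right) Gauss–Radau nodes $0<\tau_1<\dots<\tau_M=1$ on $[0,1]$ ($\ell_j$ Lagrange basis polynomials). Let $\tilde{\mathbf{Q}}_\Delta\in\mathbb{R}^{\tilde M\times\tilde M}$ be the lower-triangular weight matrix of a simpler quadrature rule on the coarse nodes; as a standing assumption of the stiff-limit analysis, $\tilde{\mathbf{Q}}_\Delta$ is invertible. Let $\mathbf{A}\in\mathbb{C}^{N\times N}$, $\tilde{\mathbf{A}}\in\mathbb{C}^{\tilde N\times\tilde N}$, $\mu>0$. Let $\mathbf{N}_M$ and $\tilde{\mathbf{N}}_{\tilde M}$ be the $M\times M$ and $\tilde M\times\tilde M$ matrices with ones in the last column and zeros elsewhere, $\mathbf{H}=\mathbf{N}_M\otimes\mathbf{I}_N$, $\tilde{\mathbf{H}}=\tilde{\mathbf{N}}_{\tilde M}\otimes\mathbf{I}_{\tilde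 N}$, $\mathbf{E}\in\mathbb{R}^{L\times L}$ with ones on the first subdiagonal and zeros elsewhere. $\mathbf{C}=\mathbf{I}_{LMN}-\mu\,\mathbf{I}_L\otimes\mathbf{Q}\otimes\mathbf{A}-\mathbf{E}\otimes\mathbf{H}$ and $\tilde{\mathbf{P}}=\mathbf{I}_{L\tilde M\tilde N}-\mu\,\mathbf{I}_L\otimes\tilde{\mathbf{Q}}_\Delta\otimes\tilde{\mathbf{A}}-\mathbf{E}\otimes\tilde{\mathbf{H}}$. Restriction $\mathbf{T}_F^C=\mathbf{I}_L\otimes\mathbf{T}_{F,Q}^C\otimes\mathbf{T}_{F,A}^C\in\mathbb{R}^{L\tilde M\tilde N\times LMN}$ and interpolation $\mathbf{T}_C^F=\mathbf{I}_L\otimes\mathbf{T}_{C,Q}^F\otimes\mathbf{T}_{C,A}^F\in\mathbb{R}^{LMN\times L\tilde M\tilde N}$, with $(\mathbf{E}\otimes\tilde{\mathbf{H}})\mathbf{T}_F^C=\mathbf{T}_F^C(\mathbf{E}\otimes\mathbf{H})$. $\|\cdot\|$ is any induced matrix norm. *)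

theory Defs
  imports "HOL-Analysis.Analysis" "HOL-Computational_Algebra.Polynomial" "Jordan_Normal_Form.Matrix"
begin

definition kron :: "'a::times mat \<Rightarrow> 'a mat \<Rightarrow> 'a mat" where
  "kron A B = mat (dim_row A * dim_row B) (dim_col A * dim_col B)
     (\<lambda>(i,j). A $$ (i div dim_row B, j div dim_col B) * B $$ (i mod dim_row B, j mod dim_col B))"

(* shifted Legendre polynomials on [0,1] *)
fun sleg :: "nat \<Rightarrow> real poly" where
  "sleg 0 = 1"
| "sleg (Suc 0) = [:-1, 2:]"
| "sleg (Suc (Suc n)) = Polynomial.smult (1 / (real n + 2))
     (Polynomial.smult (2 * real n + 3) ([:-1, 2:] * sleg (Suc n)) - Polynomial.smult (real n + 1) (sleg n))"

(* right Gauss-Radau polynomial on [0,1]: its M roots are the right Radau nodes *)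
definition radau_poly :: "nat \<Rightarrow> real poly" where
  "radau_poly M = sleg M - sleg (M - 1)"

(* tau 0 < ... < tau (M-1) are the right Gauss-Radau nodes on [0,1] (0-based indexing) *)
definition right_radau_nodes :: "nat \<Rightarrow> (nat \<Rightarrow> real) \<Rightarrow> bool" where
  "right_radau_nodes M \<tau> \<longleftrightarrow> strict_mono_on {..<M} \<tau> \<and> 0 < \<tau> 0 \<and> \<tau> (M - 1) = 1
      \<and> (\<forall>m<M. poly (radau_poly M) (\<tau> m) = 0)"

definition lagrange_basis :: "(nat \<Rightarrow> real) \<Rightarrow> nat \<Rightarrow> nat \<Rightarrow> real \<Rightarrow> real" where
  "lagrange_basis \<tau> M j s = (\<Prod>k\<in>{..<M} - {j}. (s - \<tau> k) / (\<tau> j - \<tau> k))"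

definition coll_Q :: "(nat \<Rightarrow> real) \<Rightarrow> nat \<Rightarrow> real mat" where
  "coll_Q \<tau> M = mat M M (\<lambda>(m,j). integral {0..\<tau> m} (lagrange_basis \<tau> M j))"

definition lastcol_ones :: "nat \<Rightarrow> 'a::{zero,one} mat" where
  "lastcol_ones n = mat n n (\<lambda>(i,j). if j = n - 1 then 1 else 0)"

definition subdiag :: "nat \<Rightarrow> 'a::{zero,one} mat" where
  "subdiag L = mat L L (\<lambda>(i,j). if i = j + 1 then 1 else 0)"

definition cmat :: "real mat \<Rightarrow> complex mat" where
  "cmat B = map_mat complex_of_real B"

(* C = I - mu I_L (x) Q (x) A - E (x) H,  H = N_M (x) I_N *)
definition sys_mat :: "nat \<Rightarrow> real mat \<Rightarrow> complex mat \<Rightarrow> real \<Rightarrow> complex mat" where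
  "sys_mat L Q A \<mu> = (let M = dim_row Q; N = dim_row A in
     1\<^sub>m (L * M * N) - complex_of_real \<mu> \<cdot>\<^sub>m kron (kron (1\<^sub>m L) (cmat Q)) A
       - kron (kron (subdiag L) (lastcol_ones M)) (1\<^sub>m N))"

definition minv :: "'a::semiring_1 mat \<Rightarrow> 'a mat" where
  "minv A = (SOME B. inverts_mat A B \<and> inverts_mat B A)"

definition is_vec_norm :: "nat \<Rightarrow> (complex vec \<Rightarrow> real) \<Rightarrow> bool" where
  "is_vec_norm n \<nu> \<longleftrightarrow>
     (\<forall>x\<in>carrier_vec n. 0 \<le> \<nu> x \<and> (\<nu> x = 0 \<longleftrightarrow> x = 0\<^sub>v n)) \<and>
     (\<forall>x\<in>carrier_vec n. \<forall>a. \<nu> (a \<cdot>\<^sub>v x) = cmod a * \<nu> x) \<and>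
     (\<forall>x\<in>carrier_vec n. \<forall>y\<in>carrier_vec n. \<nu> (x + y) \<le> \<nu> x + \<nu> y)"

definition induced_norm :: "(complex vec \<Rightarrow> real) \<Rightarrow> complex mat \<Rightarrow> real" where
  "induced_norm \<nu> B = Sup {\<nu> (B *\<^sub>v x) / \<nu> x | x. x \<in> carrier_vec (dim_col B) \<and> x \<noteq> 0\<^sub>v (dim_col B)}"

end

theory Submission
  imports Defs "Jordan_Normal_Form.Determinant"
begin

no_notation Finite_Cartesian_Product.vec.vec_nth (infixl \<open>$\<close> 90)




definition norm1 :: "complex vec \<Rightarrow> real" where
  "norm1 v = (\<Sum>i<dim_vec v. cmod (v $ i))"

lemma norm1_nonneg: "0 \<le> norm1 v"
  unfolding norm1_def by (simp add: sum_nonneg)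

lemma norm1_smult: "norm1 (a \<cdot>\<^sub>v x) = cmod a * norm1 x"
  unfolding norm1_def by (simp add: norm_mult sum_distrib_left)

lemma norm1_add: assumes "x \<in> carrier_vec n" "y \<in> carrier_vec n"
  shows "norm1 (x + y) \<le> norm1 x + norm1 y"
proof -
  have "norm1 (x + y) = (\<Sum>i<n. cmod (x $ i + y $ i))"
    using assms unfolding norm1_def by simp
  also have "\<dots> \<le> (\<Sum>i<n. cmod (x $ i) + cmod (y $ i))"
    by (rule sum_mono) (rule norm_triangle_ineq)
  also have "\<dots> = norm1 x + norm1 y"
    using assms unfolding norm1_def by (simp add: sum.distrib)
  finally show ?thesis .
qed

lemma norm1_eq0: assumes "x \<in> carrier_vec n" shows "norm1 x = 0 \<longleftrightarrow> x = 0\<^sub>v n"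
proof
  assume "norm1 x = 0"
  then have "\<forall>i\<in>{..<n}. cmod (x $ i) = 0"
    using assms unfolding norm1_def by (subst sum_nonneg_eq_0_iff[symmetric]) auto
  then show "x = 0\<^sub>v n" using assms by (intro eq_vecI) auto
next
  assume "x = 0\<^sub>v n" then show "norm1 x = 0" unfolding norm1_def by simp
qed

lemma is_vec_norm_norm1: "is_vec_norm n norm1"
  unfolding is_vec_norm_def by (auto simp: norm1_nonneg norm1_eq0 norm1_smult intro: norm1_add)

lemma coord_le_norm1: assumes "x \<in> carrier_vec n" "i < n" shows "cmod (x $ i) \<le> norm1 x"
proof -
  have "cmod (x $ i) \<le> (\<Sum>j\<in>{..<n}. cmod (x $ j))"
    by (rule member_le_sum) (use assms in auto)
  then show ?thesis using assms unfolding norm1_def by simp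
qed

context
  fixes n :: nat and \<nu> :: "complex vec \<Rightarrow> real"
  assumes nu: "is_vec_norm n \<nu>"
begin

lemma nu_nonneg: "x \<in> carrier_vec n \<Longrightarrow> 0 \<le> \<nu> x"
  using nu unfolding is_vec_norm_def by blast

lemma nu_eq0: "x \<in> carrier_vec n \<Longrightarrow> \<nu> x = 0 \<longleftrightarrow> x = 0\<^sub>v n"
  using nu unfolding is_vec_norm_def by blast

lemma nu_smult: "x \<in> carrier_vec n \<Longrightarrow> \<nu> (a \<cdot>\<^sub>v x) = cmod a * \<nu> x"
  using nu unfolding is_vec_norm_def by blast

lemma nu_add: "x \<in> carrier_vec n \<Longrightarrow> y \<in> carrier_vec n \<Longrightarrow> \<nu> (x + y) \<le> \<nu> x + \<nu> y"
  using nu unfolding is_vec_norm_def by blast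

lemma nu_zero: "\<nu> (0\<^sub>v n) = 0"
  using nu_eq0 by simp

lemma nu_uminus: "x \<in> carrier_vec n \<Longrightarrow> \<nu> (- x) = \<nu> x"
proof -
  assume x: "x \<in> carrier_vec n"
  have "- x = (-1) \<cdot>\<^sub>v x" using x by (intro eq_vecI) auto
  then show ?thesis using nu_smult[OF x, of "-1"] by simp
qed

lemma nu_diff: "x \<in> carrier_vec n \<Longrightarrow> y \<in> carrier_vec n \<Longrightarrow> \<nu> (x - y) \<le> \<nu> x + \<nu> y"
proof -
  assume x: "x \<in> carrier_vec n" and y: "y \<in> carrier_vec n"
  have "x - y = x + (- y)" using x y by (intro eq_vecI) auto
  then show ?thesis using nu_add[OF x, of "- y"] nu_uminus[OF y] y by simp
qed

lemma nu_partial: "x \<in> carrier_vec n \<Longrightarrow>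
   \<nu> (vec n (\<lambda>i. if i < k then x $ i else 0)) \<le> (\<Sum>i<k. cmod (x $ i) * \<nu> (unit_vec n i))"
proof (induction k)
  case 0
  have "vec n (\<lambda>i. if i < 0 then x $ i else 0) = 0\<^sub>v n" by (intro eq_vecI) auto
  then show ?case using nu_zero by simp
next
  case (Suc k)
  show ?case
  proof (cases "k < n")
    case True
    have eq: "vec n (\<lambda>i. if i < Suc k then x $ i else 0) =
      vec n (\<lambda>i. if i < k then x $ i else 0) + (x $ k) \<cdot>\<^sub>v unit_vec n k"
      using True by (intro eq_vecI) (auto simp: unit_vec_def less_Suc_eq)
    have "\<nu> (vec n (\<lambda>i. if i < Suc k then x $ i else 0)) \<le>
       \<nu> (vec n (\<lambda>i. if i < k then x $ i else 0)) + \<nu> ((x $ k) \<cdot>\<^sub>v unit_vec n k)"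
      unfolding eq by (rule nu_add) auto
    also have "\<dots> \<le> (\<Sum>i<k. cmod (x $ i) * \<nu> (unit_vec n i)) + cmod (x $ k) * \<nu> (unit_vec n k)"
      using Suc nu_smult[of "unit_vec n k" "x $ k"] by simp
    finally show ?thesis by simp
  next
    case False
    have eq: "vec n (\<lambda>i. if i < Suc k then x $ i else 0) = vec n (\<lambda>i. if i < k then x $ i else 0)"
      using False by (intro eq_vecI) auto
    have "0 \<le> cmod (x $ k) * \<nu> (unit_vec n k)"
      using nu_nonneg[of "unit_vec n k"] by simp
    then show ?thesis using Suc unfolding eq by simp
  qed
qed

lemma nu_upper: "\<exists>K\<ge>0. \<forall>x\<in>carrier_vec n. \<nu> x \<le> K * norm1 x"
proof (intro exI[of _ "\<Sum>i<n. \<nu> (unit_vec n i)"] conjI ballI)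
  show "0 \<le> (\<Sum>i<n. \<nu> (unit_vec n i))" using nu_nonneg by (intro sum_nonneg) auto
  fix x :: "complex vec" assume x: "x \<in> carrier_vec n"
  have eq: "vec n (\<lambda>i. if i < n then x $ i else 0) = x" using x by (intro eq_vecI) auto
  have "\<nu> x \<le> (\<Sum>i<n. cmod (x $ i) * \<nu> (unit_vec n i))"
    using nu_partial[OF x, of n] unfolding eq .
  also have "\<dots> \<le> (\<Sum>i<n. cmod (x $ i) * (\<Sum>i<n. \<nu> (unit_vec n i)))"
  proof (rule sum_mono)
    fix i assume i: "i \<in> {..<n}"
    have "\<nu> (unit_vec n i) \<le> (\<Sum>i<n. \<nu> (unit_vec n i))"
      using i nu_nonneg by (intro member_le_sum) auto
    then show "cmod (x $ i) * \<nu> (unit_vec n i) \<le> cmod (x $ i) * (\<Sum>i<n. \<nu> (unit_vec n i))"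
      by (intro mult_left_mono) auto
  qed
  also have "\<dots> = (\<Sum>i<n. \<nu> (unit_vec n i)) * norm1 x"
    using x unfolding norm1_def by (simp add: sum_distrib_right mult.commute)
  finally show "\<nu> x \<le> (\<Sum>i<n. \<nu> (unit_vec n i)) * norm1 x" .
qed

end

lemma coord_subseq:
  fixes X :: "nat \<Rightarrow> complex vec"
  assumes "\<forall>j i. i < n \<longrightarrow> cmod (X j $ i) \<le> B"
  shows "\<exists>r l. strict_mono r \<and> (\<forall>i<n. (\<lambda>j. X (r j) $ i) \<longlonglongrightarrow> l i)"
  using assms
proof (induction n)
  case 0
  show ?case by (intro exI[of _ id]) (auto simp: strict_mono_def)
next
  case (Suc n)
  then obtain r l where r: "strict_mono r" and l: "\<forall>i<n. (\<lambda>j. X (r j) $ i) \<longlonglongrightarrow> l i"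
    by auto
  have "bounded (range (\<lambda>j. X (r j) $ n))"
    using Suc.prems by (intro boundedI[of _ B]) auto
  then obtain l' s where s: "strict_mono s" and l': "((\<lambda>j. X (r j) $ n) \<circ> s) \<longlonglongrightarrow> l'"
    using bounded_imp_convergent_subsequence by blast
  show ?case
  proof (intro exI[of _ "r \<circ> s"] exI[of _ "l(n := l')"] conjI allI impI)
    show "strict_mono (r \<circ> s)" using r s by (rule strict_mono_o)
    fix i assume i: "i < Suc n"
    show "(\<lambda>j. X ((r \<circ> s) j) $ i) \<longlonglongrightarrow> (l(n := l')) i"
    proof (cases "i = n")
      case True
      then show ?thesis using l' by (simp add: o_def)
    next
      case False
      then have "i < n" using i by simp
      then have "((\<lambda>j. X (r j) $ i) \<circ> s) \<longlonglongrightarrow> l i"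
        using l s by (intro LIMSEQ_subseq_LIMSEQ) auto
      then show ?thesis using False by (simp add: o_def)
    qed
  qed
qed





lemma nu_lower:
  assumes nu: "is_vec_norm n \<nu>"
  shows "\<exists>k>0. \<forall>x\<in>carrier_vec n. norm1 x \<le> k * \<nu> x"
proof (rule ccontr)
  assume neg: "\<not> ?thesis"
  obtain K where K: "K \<ge> 0" "\<forall>x\<in>carrier_vec n. \<nu> x \<le> K * norm1 x"
    using nu_upper[OF nu] by blast
  have "\<forall>j::nat. \<exists>x. x \<in> carrier_vec n \<and> norm1 x = 1 \<and> \<nu> x < 1 / (real j + 1)"
  proof
    fix j :: nat
    have "real j + 1 > 0" by simp
    with neg have "\<not> (\<forall>x\<in>carrier_vec n. norm1 x \<le> (real j + 1) * \<nu> x)" by blast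
    then obtain x where x: "x \<in> carrier_vec n" and lt: "(real j + 1) * \<nu> x < norm1 x"
      by (auto simp: not_le)
    have "0 \<le> (real j + 1) * \<nu> x" using nu_nonneg[OF nu x] by simp
    then have nx: "0 < norm1 x" using lt by linarith
    define z where "z = complex_of_real (1 / norm1 x) \<cdot>\<^sub>v x"
    have z: "z \<in> carrier_vec n" using x unfolding z_def by simp
    have "norm1 z = 1" unfolding z_def norm1_smult using nx by (simp add: norm_divide)
    moreover have "\<nu> z = \<nu> x / norm1 x"
      unfolding z_def using nu_smult[OF nu x] nx by (simp add: norm_divide)
    moreover have "\<nu> x / norm1 x < 1 / (real j + 1)"
      using lt nx by (simp add: field_simps)
    ultimately show "\<exists>x. x \<in> carrier_vec n \<and> norm1 x = 1 \<and> \<nu> x < 1 / (real j + 1)"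
      using z by auto
  qed
  then obtain X where X: "\<And>j. X j \<in> carrier_vec n" "\<And>j. norm1 (X j) = 1"
     "\<And>j. \<nu> (X j) < 1 / (real j + 1)"
    by metis
  have bnd: "\<forall>j i. i < n \<longrightarrow> cmod (X j $ i) \<le> 1"
    using X(1,2) coord_le_norm1 by metis
  obtain r l where r: "strict_mono r" and l: "\<forall>i<n. (\<lambda>j. X (r j) $ i) \<longlonglongrightarrow> l i"
    using coord_subseq[OF bnd] by blast
  define y where "y = vec n l"
  have y: "y \<in> carrier_vec n" unfolding y_def by simp
  have lim1: "(\<lambda>j. norm1 (y - X (r j))) \<longlonglongrightarrow> 0"
  proof -
    have eq: "norm1 (y - X (r j)) = (\<Sum>i<n. cmod (l i - X (r j) $ i))" for j
      using X(1)[of "r j"] by (simp add: norm1_def y_def)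
    have "(\<lambda>j. \<Sum>i<n. cmod (l i - X (r j) $ i)) \<longlonglongrightarrow> (\<Sum>i<n. cmod (l i - l i))"
      by (intro tendsto_intros) (use l in auto)
    then show ?thesis unfolding eq by simp
  qed
  have norm_y: "norm1 y = 1"
  proof -
    have eq: "norm1 (X (r j)) = (\<Sum>i<n. cmod (X (r j) $ i))" for j
      using X(1)[of "r j"] by (simp add: norm1_def)
    have "(\<lambda>j. \<Sum>i<n. cmod (X (r j) $ i)) \<longlonglongrightarrow> (\<Sum>i<n. cmod (l i))"
      by (intro tendsto_intros) (use l in auto)
    then have "(\<lambda>j. norm1 (X (r j))) \<longlonglongrightarrow> norm1 y"
      unfolding eq by (simp add: norm1_def y_def)
    then have "(\<lambda>j. 1) \<longlonglongrightarrow> norm1 y" using X(2) by simp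
    then show ?thesis using LIMSEQ_unique tendsto_const by blast
  qed
  have lim2: "(\<lambda>j. 1 / (real (r j) + 1) + K * norm1 (y - X (r j))) \<longlonglongrightarrow> 0"
  proof -
    have "(\<lambda>j. inverse (real (Suc j))) \<longlonglongrightarrow> 0" by (rule LIMSEQ_inverse_real_of_nat)
    then have "((\<lambda>j. inverse (real (Suc j))) \<circ> r) \<longlonglongrightarrow> 0" using r by (rule LIMSEQ_subseq_LIMSEQ)
    then have a: "(\<lambda>j. 1 / (real (r j) + 1)) \<longlonglongrightarrow> 0" by (simp add: o_def divide_inverse add.commute)
    have "(\<lambda>j. 1 / (real (r j) + 1) + K * norm1 (y - X (r j))) \<longlonglongrightarrow> 0 + K * 0"
      by (intro tendsto_intros a lim1)
    then show ?thesis by simp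
  qed
  have ineq: "\<forall>j. \<nu> y \<le> 1 / (real (r j) + 1) + K * norm1 (y - X (r j))"
  proof
    fix j
    have yx: "y - X (r j) \<in> carrier_vec n" using y X(1) by simp
    have "y = X (r j) + (y - X (r j))" using y X(1)[of "r j"] by (intro eq_vecI) auto
    then have "\<nu> y \<le> \<nu> (X (r j)) + \<nu> (y - X (r j))"
      using nu_add[OF nu X(1)[of "r j"] yx] by simp
    also have "\<dots> \<le> 1 / (real (r j) + 1) + K * norm1 (y - X (r j))"
      using X(3)[of "r j"] K(2) yx by (intro add_mono) auto
    finally show "\<nu> y \<le> 1 / (real (r j) + 1) + K * norm1 (y - X (r j))" .
  qed
  have "\<nu> y \<le> 0"
    using lim2 ineq by (intro LIMSEQ_le[OF tendsto_const lim2]) auto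
  then have "\<nu> y = 0" using nu_nonneg[OF nu y] by simp
  then have "y = 0\<^sub>v n" using nu_eq0[OF nu y] by simp
  then show False using norm_y norm1_eq0[OF y] by simp
qed

lemma mult_mat_vec_index: "A \<in> carrier_mat m n \<Longrightarrow> x \<in> carrier_vec n \<Longrightarrow> i < m \<Longrightarrow>
  Matrix.row A i \<bullet> x = (\<Sum>j<n. A $$ (i, j) * x $ j)"
  unfolding scalar_prod_def atLeast0LessThan by (intro sum.cong) auto

lemma norm1_mat_bound: assumes A: "A \<in> carrier_mat m n"
  shows "\<exists>b\<ge>0. \<forall>x\<in>carrier_vec n. norm1 (A *\<^sub>v x) \<le> b * norm1 x"
proof (intro exI[of _ "\<Sum>i<m. \<Sum>j<n. cmod (A $$ (i, j))"] conjI ballI)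
  show "0 \<le> (\<Sum>i<m. \<Sum>j<n. cmod (A $$ (i, j)))" by (intro sum_nonneg) auto
  fix x :: "complex vec" assume x: "x \<in> carrier_vec n"
  have "norm1 (A *\<^sub>v x) = (\<Sum>i<m. cmod (\<Sum>j<n. A $$ (i, j) * x $ j))"
    using A x by (simp add: norm1_def mult_mat_vec_index[OF A x])
  also have "\<dots> \<le> (\<Sum>i<m. \<Sum>j<n. cmod (A $$ (i, j)) * norm1 x)"
  proof (rule sum_mono)
    fix i assume i: "i \<in> {..<m}"
    have "cmod (\<Sum>j<n. A $$ (i, j) * x $ j) \<le> (\<Sum>j<n. cmod (A $$ (i, j) * x $ j))"
      by (rule norm_sum)
    also have "\<dots> \<le> (\<Sum>j<n. cmod (A $$ (i, j)) * norm1 x)"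
      using coord_le_norm1[OF x] by (intro sum_mono) (auto simp: norm_mult intro: mult_left_mono)
    finally show "cmod (\<Sum>j<n. A $$ (i, j) * x $ j) \<le> (\<Sum>j<n. cmod (A $$ (i, j)) * norm1 x)" .
  qed
  also have "\<dots> = (\<Sum>i<m. \<Sum>j<n. cmod (A $$ (i, j))) * norm1 x"
    by (simp add: sum_distrib_right)
  finally show "norm1 (A *\<^sub>v x) \<le> (\<Sum>i<m. \<Sum>j<n. cmod (A $$ (i, j))) * norm1 x" .
qed

lemma mat_bound:
  assumes nu1: "is_vec_norm n \<nu>1" and nu2: "is_vec_norm m \<nu>2" and A: "A \<in> carrier_mat m n"
  shows "\<exists>b\<ge>0. \<forall>x\<in>carrier_vec n. \<nu>2 (A *\<^sub>v x) \<le> b * \<nu>1 x"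
proof -
  obtain K where K: "K \<ge> 0" "\<forall>x\<in>carrier_vec m. \<nu>2 x \<le> K * norm1 x"
    using nu_upper[OF nu2] by blast
  obtain b where b: "b \<ge> 0" "\<forall>x\<in>carrier_vec n. norm1 (A *\<^sub>v x) \<le> b * norm1 x"
    using norm1_mat_bound[OF A] by blast
  obtain k where k: "k > 0" "\<forall>x\<in>carrier_vec n. norm1 x \<le> k * \<nu>1 x"
    using nu_lower[OF nu1] by blast
  show ?thesis
  proof (intro exI[of _ "K * b * k"] conjI ballI)
    show "0 \<le> K * b * k" using K b k by simp
    fix x :: "complex vec" assume x: "x \<in> carrier_vec n"
    have Ax: "A *\<^sub>v x \<in> carrier_vec m" using A x by simp
    have "\<nu>2 (A *\<^sub>v x) \<le> K * norm1 (A *\<^sub>v x)" using K Ax by blast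
    also have "\<dots> \<le> K * (b * norm1 x)" using K b x by (intro mult_left_mono) auto
    also have "\<dots> \<le> K * (b * (k * \<nu>1 x))" using K b k x by (intro mult_left_mono) auto
    finally show "\<nu>2 (A *\<^sub>v x) \<le> K * b * k * \<nu>1 x" by (simp add: mult.assoc)
  qed
qed

lemma inj_imp_invertible:
  fixes A :: "'a::field mat"
  assumes A: "A \<in> carrier_mat n n"
    and inj: "\<And>v. v \<in> carrier_vec n \<Longrightarrow> A *\<^sub>v v = 0\<^sub>v n \<Longrightarrow> v = 0\<^sub>v n"
  shows "invertible_mat A"
proof -
  have "A \<in> Units (ring_mat TYPE('a) n ())"
    apply (rule det_non_zero_imp_unit[OF A])
    using det_0_iff_vec_prod_zero_field[OF A] inj by blast
  then obtain B where B: "B \<in> carrier_mat n n" "B * A = 1\<^sub>m n" "A * B = 1\<^sub>m n"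
    unfolding Units_def ring_mat_def by auto
  then show ?thesis using A unfolding invertible_mat_def inverts_mat_def by auto
qed

lemma minv:
  assumes "invertible_mat A" "A \<in> carrier_mat n n"
  shows "minv A \<in> carrier_mat n n \<and> A * minv A = 1\<^sub>m n \<and> minv A * A = 1\<^sub>m n"
proof -
  have ex: "\<exists>B. inverts_mat A B \<and> inverts_mat B A" using assms(1) unfolding invertible_mat_def by blast
  have inv: "inverts_mat A (minv A) \<and> inverts_mat (minv A) A"
    unfolding minv_def using someI_ex[OF ex] .
  let ?B = "minv A"
  have 1: "A * ?B = 1\<^sub>m n" using inv assms(2) unfolding inverts_mat_def by simp
  have 2: "?B * A = 1\<^sub>m (dim_row ?B)" using inv unfolding inverts_mat_def by simp
  have c: "dim_col ?B = n" using arg_cong[OF 1, of dim_col] by simp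
  have r: "dim_row ?B = n" using arg_cong[OF 2, of dim_col] assms(2) by simp
  show ?thesis using 1 2 c r by auto
qed

lemma smult_mat_mult_vec: "A \<in> carrier_mat nr nc \<Longrightarrow> v \<in> carrier_vec nc \<Longrightarrow>
   (k \<cdot>\<^sub>m A) *\<^sub>v v = k \<cdot>\<^sub>v (A *\<^sub>v v)"
  by (intro eq_vecI) (auto simp: smult_scalar_prod_distrib[of _ nc])





lemma inv_bound:
  fixes K R :: "complex mat"
  assumes nu: "is_vec_norm n \<nu>" and K: "K \<in> carrier_mat n n" "invertible_mat K"
    and R: "R \<in> carrier_mat n n"
  shows "\<exists>\<mu>0>0. \<exists>c>0. \<forall>\<mu>\<ge>\<mu>0. invertible_mat (R - complex_of_real \<mu> \<cdot>\<^sub>m K) \<and>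
     (\<forall>y\<in>carrier_vec n. \<nu> (minv (R - complex_of_real \<mu> \<cdot>\<^sub>m K) *\<^sub>v y) \<le> c / \<mu> * \<nu> y)"
proof -
  define Ki where "Ki = minv K"
  have Ki: "Ki \<in> carrier_mat n n" "Ki * K = 1\<^sub>m n" using minv[OF K(2,1)] unfolding Ki_def by auto
  have KiR: "Ki * R \<in> carrier_mat n n" using Ki R by simp
  obtain g where g: "g \<ge> 0" "\<forall>x\<in>carrier_vec n. \<nu> (Ki * R *\<^sub>v x) \<le> g * \<nu> x"
    using mat_bound[OF nu nu KiR] by blast
  obtain k where k: "k \<ge> 0" "\<forall>x\<in>carrier_vec n. \<nu> (Ki *\<^sub>v x) \<le> k * \<nu> x"
    using mat_bound[OF nu nu Ki(1)] by blast
  define c where "c = 2 * (k + 1)"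
  have c: "c > 0" using k unfolding c_def by simp
  have key: "\<nu> x \<le> c / \<mu> * \<nu> y"
    if mu: "\<mu> \<ge> 2 * g + 1" and x: "x \<in> carrier_vec n" and y: "y \<in> carrier_vec n"
      and eq: "(R - complex_of_real \<mu> \<cdot>\<^sub>m K) *\<^sub>v x = y" for \<mu> x y
  proof -
    have mpos: "\<mu> > 0" using mu g by linarith
    have muK: "complex_of_real \<mu> \<cdot>\<^sub>m K \<in> carrier_mat n n" using K by simp
    have "Ki *\<^sub>v y = Ki *\<^sub>v ((R - complex_of_real \<mu> \<cdot>\<^sub>m K) *\<^sub>v x)" using eq by simp
    also have "\<dots> = Ki *\<^sub>v (R *\<^sub>v x - complex_of_real \<mu> \<cdot>\<^sub>v (K *\<^sub>v x))"
      using R K x by (simp add: minus_mult_distrib_mat_vec[OF R muK x] smult_mat_mult_vec[OF K(1) x])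
    also have "\<dots> = (Ki * R) *\<^sub>v x - complex_of_real \<mu> \<cdot>\<^sub>v x"
    proof -
      have KK: "Ki *\<^sub>v (K *\<^sub>v x) = x"
        using assoc_mult_mat_vec[of Ki n n K n x] Ki K x by simp
      show ?thesis using R K x Ki KK
        by (simp add: mult_minus_distrib_mat_vec[of Ki n n] mult_mat_vec[of Ki n n] assoc_mult_mat_vec[of _ n n _ n])
    qed
    finally have e2: "complex_of_real \<mu> \<cdot>\<^sub>v x = (Ki * R) *\<^sub>v x - Ki *\<^sub>v y"
      using Ki R x y by (intro eq_vecI) (auto simp: algebra_simps dest: arg_cong[of _ _ "\<lambda>v. v $ _"])
    have "\<mu> * \<nu> x = \<nu> (complex_of_real \<mu> \<cdot>\<^sub>v x)" using nu_smult[OF nu x] mpos by simp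
    also have "\<dots> \<le> \<nu> ((Ki * R) *\<^sub>v x) + \<nu> (Ki *\<^sub>v y)"
      unfolding e2 using KiR Ki x y by (intro nu_diff[OF nu]) auto
    also have "\<dots> \<le> g * \<nu> x + k * \<nu> y" using g k x y by (intro add_mono) auto
    finally have a: "\<mu> * \<nu> x \<le> g * \<nu> x + k * \<nu> y" .
    have "g * \<nu> x \<le> (\<mu> / 2) * \<nu> x" using mu nu_nonneg[OF nu x] by (intro mult_right_mono) auto
    with a have "(\<mu> / 2) * \<nu> x \<le> k * \<nu> y" by linarith
    then have "\<nu> x \<le> (2 * k / \<mu>) * \<nu> y" using mpos by (simp add: field_simps)
    also have "\<dots> \<le> c / \<mu> * \<nu> y" unfolding c_def using mpos nu_nonneg[OF nu y]
      by (intro mult_right_mono divide_right_mono) auto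
    finally show ?thesis .
  qed
  show ?thesis
  proof (rule exI[of _ "2 * g + 1"], intro conjI exI[of _ c] allI impI c)
    show "0 < 2 * g + 1" using g by simp
    fix \<mu> :: real assume mu: "2 * g + 1 \<le> \<mu>"
    let ?C = "R - complex_of_real \<mu> \<cdot>\<^sub>m K"
    have C: "?C \<in> carrier_mat n n" using K by (intro minus_carrier_mat) simp
    show inv: "invertible_mat ?C"
    proof (rule inj_imp_invertible[OF C])
      fix v assume v: "v \<in> carrier_vec n" and "?C *\<^sub>v v = 0\<^sub>v n"
      then have "\<nu> v \<le> c / \<mu> * \<nu> (0\<^sub>v n)" using key[OF mu v] by simp
      then have "\<nu> v \<le> 0" using nu_zero[OF nu] by simp
      then have "\<nu> v = 0" using nu_nonneg[OF nu v] by simp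
      then show "v = 0\<^sub>v n" using nu_eq0[OF nu v] by simp
    qed
    have mi: "minv ?C \<in> carrier_mat n n" "?C * minv ?C = 1\<^sub>m n" using minv[OF inv C] by auto
    have yb: "\<nu> (minv ?C *\<^sub>v y) \<le> c / \<mu> * \<nu> y" if y: "y \<in> carrier_vec n" for y
    proof -
      have "?C *\<^sub>v (minv ?C *\<^sub>v y) = y"
        using mi y C by (simp add: assoc_mult_mat_vec[symmetric, of _ n n _ n])
      then show ?thesis
        using key[OF mu _ y] mi y by simp
    qed
    then show "\<forall>y\<in>carrier_vec n. \<nu> (minv ?C *\<^sub>v y) \<le> c / \<mu> * \<nu> y" by blast
  qed
qed





lemma kron_carrier[simp]: "A \<in> carrier_mat a b \<Longrightarrow> B \<in> carrier_mat c d \<Longrightarrow> kron A B \<in> carrier_mat (a * c) (b * d)"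
  unfolding kron_def by auto

lemma kron_dims[simp]: "dim_row (kron A B) = dim_row A * dim_row B" "dim_col (kron A B) = dim_col A * dim_col B"
  unfolding kron_def by auto

lemma div_lt_aux: "i < a * c \<Longrightarrow> i div c < (a::nat)"
  by (metis less_mult_imp_div_less mult.commute)

lemma kron_index: "i < dim_row A * dim_row B \<Longrightarrow> j < dim_col A * dim_col B \<Longrightarrow>
  kron A B $$ (i, j) = A $$ (i div dim_row B, j div dim_col B) * B $$ (i mod dim_row B, j mod dim_col B)"
  unfolding kron_def by auto

lemma mat_mult_index_sum: "A \<in> carrier_mat a b \<Longrightarrow> B \<in> carrier_mat b c \<Longrightarrow> i < a \<Longrightarrow> j < c \<Longrightarrow>
  (A * B) $$ (i, j) = (\<Sum>k<b. A $$ (i, k) * B $$ (k, j))"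
  by (auto simp: scalar_prod_def atLeast0LessThan intro!: sum.cong)

lemma kron_mult:
  fixes A B C D :: "'a::comm_semiring_1 mat"
  assumes A: "A \<in> carrier_mat a b" and B: "B \<in> carrier_mat c d"
    and C: "C \<in> carrier_mat b e" and D: "D \<in> carrier_mat d f"
  shows "kron A B * kron C D = kron (A * C) (B * D)"
proof (rule eq_matI)
  show "dim_row (kron A B * kron C D) = dim_row (kron (A * C) (B * D))" using A B C D by simp
  show "dim_col (kron A B * kron C D) = dim_col (kron (A * C) (B * D))" using A B C D by simp
  fix i j assume i: "i < dim_row (kron (A * C) (B * D))" and j: "j < dim_col (kron (A * C) (B * D))"
  have i': "i < a * c" and j': "j < e * f" using i j A B C D by auto
  have c0: "c > 0" using i' by (cases c) auto
  have f0: "f > 0" using j' by (cases f) auto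
  have ic: "i div c < a" "i mod c < c" using i' c0 by (auto simp: div_lt_aux)
  have jf: "j div f < e" "j mod f < f" using j' f0 by (auto simp: div_lt_aux)
  have "(kron A B * kron C D) $$ (i, j) = (\<Sum>k<b * d. kron A B $$ (i, k) * kron C D $$ (k, j))"
    using A B C D i' j' by (intro mat_mult_index_sum) auto
  also have "\<dots> = (\<Sum>k<b * d. A $$ (i div c, k div d) * B $$ (i mod c, k mod d) *
                     (C $$ (k div d, j div f) * D $$ (k mod d, j mod f)))"
    using A B C D i' j' by (intro sum.cong) (auto simp: kron_index)
  also have "\<dots> = (\<Sum>p<b. \<Sum>q<d. A $$ (i div c, p) * B $$ (i mod c, q) *
                     (C $$ (p, j div f) * D $$ (q, j mod f)))"
    by (subst sum_mult_product) (intro sum.cong refl, simp)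
  also have "\<dots> = (\<Sum>p<b. A $$ (i div c, p) * C $$ (p, j div f)) * (\<Sum>q<d. B $$ (i mod c, q) * D $$ (q, j mod f))"
    by (simp add: sum_product algebra_simps)
  also have "\<dots> = (A * C) $$ (i div c, j div f) * (B * D) $$ (i mod c, j mod f)"
    using mat_mult_index_sum[OF A C ic(1) jf(1)] mat_mult_index_sum[OF B D ic(2) jf(2)] by simp
  also have "\<dots> = kron (A * C) (B * D) $$ (i, j)"
    using A B C D i' j' by (simp add: kron_index)
  finally show "(kron A B * kron C D) $$ (i, j) = kron (A * C) (B * D) $$ (i, j)" .
qed

lemma kron_one: "kron (1\<^sub>m a) (1\<^sub>m b) = (1\<^sub>m (a * b) :: 'a::semiring_1 mat)"
proof (rule eq_matI)
  fix i j assume i: "i < dim_row (1\<^sub>m (a * b) :: 'a mat)" and j: "j < dim_col (1\<^sub>m (a * b) :: 'a mat)"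
  then have i': "i < a * b" and j': "j < a * b" by auto
  have b0: "b > 0" using i' by (cases b) auto
  have "(i div b = j div b \<and> i mod b = j mod b) \<longleftrightarrow> i = j"
    by (metis div_mult_mod_eq)
  then show "kron (1\<^sub>m a) (1\<^sub>m b) $$ (i, j) = (1\<^sub>m (a * b) :: 'a mat) $$ (i, j)"
    using i' j' b0 by (auto simp: kron_index div_lt_aux)
qed auto

lemma invertible_byI: "A \<in> carrier_mat n n \<Longrightarrow> B \<in> carrier_mat n n \<Longrightarrow> A * B = 1\<^sub>m n \<Longrightarrow> B * A = 1\<^sub>m n \<Longrightarrow>
   invertible_mat A"
  unfolding invertible_mat_def inverts_mat_def by auto

lemma cmat_carrier[simp]: "cmat A \<in> carrier_mat n m \<longleftrightarrow> A \<in> carrier_mat n m"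
  unfolding cmat_def by auto

lemma cmat_dims[simp]: "dim_row (cmat A) = dim_row A" "dim_col (cmat A) = dim_col A"
  unfolding cmat_def by auto

lemma cmat_invertible: assumes "invertible_mat Q" "Q \<in> carrier_mat m m"
  shows "invertible_mat (cmat Q)"
proof -
  obtain Qi where Qi: "Qi \<in> carrier_mat m m" "Q * Qi = 1\<^sub>m m" "Qi * Q = 1\<^sub>m m"
    using minv[OF assms] by blast
  show ?thesis
  proof (rule invertible_byI[of _ m "cmat Qi"])
    show "cmat Q * cmat Qi = 1\<^sub>m m" unfolding cmat_def
      using of_real_hom.mat_hom_mult[of Q m m Qi m, symmetric] Qi assms by (simp add: of_real_hom.mat_hom_one)
    show "cmat Qi * cmat Q = 1\<^sub>m m" unfolding cmat_def
      using of_real_hom.mat_hom_mult[of Qi m m Q m, symmetric] Qi assms by (simp add: of_real_hom.mat_hom_one)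
  qed (use Qi assms in auto)
qed

lemma kron3_invertible:
  fixes Q A :: "complex mat"
  assumes Q: "Q \<in> carrier_mat m m" "invertible_mat Q" and A: "A \<in> carrier_mat n n" "invertible_mat A"
  shows "invertible_mat (kron (kron (1\<^sub>m L) Q) A)"
proof -
  obtain Qi where Qi: "Qi \<in> carrier_mat m m" "Q * Qi = 1\<^sub>m m" "Qi * Q = 1\<^sub>m m"
    using minv[OF Q(2,1)] by blast
  obtain Ai where Ai: "Ai \<in> carrier_mat n n" "A * Ai = 1\<^sub>m n" "Ai * A = 1\<^sub>m n"
    using minv[OF A(2,1)] by blast
  have one: "1\<^sub>m L \<in> carrier_mat L L" by simp
  show ?thesis
  proof (rule invertible_byI[of _ "L * m * n" "kron (kron (1\<^sub>m L) Qi) Ai"])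
    show "kron (kron (1\<^sub>m L) Q) A * kron (kron (1\<^sub>m L) Qi) Ai = 1\<^sub>m (L * m * n)"
      using Q A Qi Ai
      by (simp add: kron_mult[of _ "L * m" "L * m" _ n n _ "L * m" _ n] kron_mult[of _ L L _ m m _ L _ m] kron_one)
    show "kron (kron (1\<^sub>m L) Qi) Ai * kron (kron (1\<^sub>m L) Q) A = 1\<^sub>m (L * m * n)"
      using Q A Qi Ai
      by (simp add: kron_mult[of _ "L * m" "L * m" _ n n _ "L * m" _ n] kron_mult[of _ L L _ m m _ L _ m] kron_one)
  qed (use Q A Qi Ai in auto)
qed





lemma pderiv_sum': "pderiv (sum f A) = (\<Sum>x\<in>A. pderiv (f x))"
  using higher_pderiv_sum[of 1 f A] by simp

lemma antideriv: "\<exists>P. pderiv P = (p :: real poly) \<and> poly P 0 = 0 \<and> degree P \<le> degree p + 1"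
proof (intro exI conjI)
  let ?P = "\<Sum>i\<le>degree p. monom (coeff p i / (real i + 1)) (Suc i)"
  have "pderiv ?P = (\<Sum>i\<le>degree p. monom (coeff p i) i)"
    unfolding pderiv_sum' by (intro sum.cong refl) (simp add: pderiv_monom field_simps)
  then show "pderiv ?P = p" using poly_as_sum_of_monoms by simp
  show "poly ?P 0 = 0" by (simp add: poly_sum poly_monom)
  show "degree ?P \<le> degree p + 1"
  proof (rule degree_sum_le)
    fix i assume "i \<in> {..degree p}"
    then show "degree (monom (coeff p i / (real i + 1)) (Suc i)) \<le> degree p + 1"
      by (intro order.trans[OF degree_monom_le]) simp
  qed simp
qed

lemma integral_poly:
  assumes "pderiv P = p" "(a::real) \<le> b"
  shows "integral {a..b} (poly p) = poly P b - poly P a"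
proof -
  have "(poly p has_integral (poly P b - poly P a)) {a..b}"
  proof (rule fundamental_theorem_of_calculus[OF assms(2)])
    fix x assume "x \<in> {a..b}"
    have d: "(poly P has_field_derivative poly p x) (at x)"
      using poly_DERIV[of P x] unfolding assms(1) .
    show "(poly P has_vector_derivative poly p x) (at x within {a..b})"
      using has_field_derivative_at_within[OF d] unfolding has_real_derivative_iff_has_vector_derivative .
  qed
  then show ?thesis by (rule integral_unique)
qed

definition lp :: "(nat \<Rightarrow> real) \<Rightarrow> nat \<Rightarrow> nat \<Rightarrow> real poly" where
  "lp \<tau> M j = (\<Prod>k\<in>{..<M} - {j}. Polynomial.smult (1 / (\<tau> j - \<tau> k)) [:- \<tau> k, 1:])"

lemma poly_lp: "poly (lp \<tau> M j) = lagrange_basis \<tau> M j"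
proof (rule ext)
  fix s
  show "poly (lp \<tau> M j) s = lagrange_basis \<tau> M j s"
    unfolding lp_def lagrange_basis_def poly_prod
    by (intro prod.cong refl) (simp add: diff_divide_distrib)
qed

lemma degree_lp: "degree (lp \<tau> M j) \<le> M"
proof -
  have "degree (lp \<tau> M j) \<le> sum (degree \<circ> (\<lambda>k. Polynomial.smult (1 / (\<tau> j - \<tau> k)) [:- \<tau> k, 1:])) ({..<M} - {j})"
    unfolding lp_def by (rule degree_prod_sum_le) simp
  also have "\<dots> \<le> sum (\<lambda>k. 1) ({..<M} - {j})"
  proof (rule sum_mono)
    fix k assume "k \<in> {..<M} - {j}"
    show "(degree \<circ> (\<lambda>k. Polynomial.smult (1 / (\<tau> j - \<tau> k)) [:- \<tau> k, 1:])) k \<le> 1"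
      unfolding o_def by (rule order.trans[OF degree_smult_le]) simp
  qed
  also have "\<dots> \<le> M" by (simp add: card_Diff_subset_Int)
  finally show ?thesis .
qed

lemma degree_lp': "j < M \<Longrightarrow> degree (lp \<tau> M j) \<le> M - 1"
proof -
  assume j: "j < M"
  have "degree (lp \<tau> M j) \<le> sum (degree \<circ> (\<lambda>k. Polynomial.smult (1 / (\<tau> j - \<tau> k)) [:- \<tau> k, 1:])) ({..<M} - {j})"
    unfolding lp_def by (rule degree_prod_sum_le) simp
  also have "\<dots> \<le> sum (\<lambda>k. 1) ({..<M} - {j})"
  proof (rule sum_mono)
    fix k assume "k \<in> {..<M} - {j}"
    show "(degree \<circ> (\<lambda>k. Polynomial.smult (1 / (\<tau> j - \<tau> k)) [:- \<tau> k, 1:])) k \<le> 1"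
      unfolding o_def by (rule order.trans[OF degree_smult_le]) simp
  qed
  also have "\<dots> = M - 1" using j by simp
  finally show ?thesis .
qed

lemma lagrange_at_node:
  assumes inj: "inj_on \<tau> {..<M}" and j: "j < M" and k: "k < M"
  shows "lagrange_basis \<tau> M j (\<tau> k) = (if j = k then 1 else 0)"
proof (cases "j = k")
  case True
  have "lagrange_basis \<tau> M j (\<tau> k) = (\<Prod>i\<in>{..<M} - {j}. 1)"
    unfolding lagrange_basis_def True
  proof (intro prod.cong refl)
    fix i assume "i \<in> {..<M} - {k}"
    then have "\<tau> k \<noteq> \<tau> i" using inj k by (auto dest: inj_onD)
    then show "(\<tau> k - \<tau> i) / (\<tau> k - \<tau> i) = 1" by simp
  qed
  then show ?thesis using True by simp
next
  case False
  have "lagrange_basis \<tau> M j (\<tau> k) = 0"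
    unfolding lagrange_basis_def using False k by (intro prod_zero) auto
  then show ?thesis using False by simp
qed

lemma coll_Q_invertible:
  assumes M: "0 < M" and mono: "strict_mono_on {..<M} \<tau>" and pos: "0 < \<tau> 0"
  shows "invertible_mat (coll_Q \<tau> M)"
proof (rule inj_imp_invertible)
  show Qc: "coll_Q \<tau> M \<in> carrier_mat M M" unfolding coll_Q_def by simp
  have inj: "inj_on \<tau> {..<M}" using mono by (rule strict_mono_on_imp_inj_on)
  have tpos: "0 < \<tau> m" if "m < M" for m
  proof (cases "m = 0")
    case False
    then have "\<tau> 0 < \<tau> m" using mono that M unfolding strict_mono_on_def by auto
    then show ?thesis using pos by simp
  qed (use pos in simp)
  have "\<forall>j. \<exists>Pj. pderiv Pj = lp \<tau> M j \<and> poly Pj 0 = 0 \<and> degree Pj \<le> degree (lp \<tau> M j) + 1"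
    by (intro allI antideriv)
  from choice[OF this] obtain P where P0: "\<forall>j. pderiv (P j) = lp \<tau> M j \<and> poly (P j) 0 = 0 \<and> degree (P j) \<le> degree (lp \<tau> M j) + 1"
    by blast
  have P: "\<And>j. pderiv (P j) = lp \<tau> M j" "\<And>j. poly (P j) 0 = 0"
     "\<And>j. degree (P j) \<le> degree (lp \<tau> M j) + 1"
    using P0 by auto
  fix x :: "real vec" assume x: "x \<in> carrier_vec M" and Qx: "coll_Q \<tau> M *\<^sub>v x = 0\<^sub>v M"
  define PP where "PP = (\<Sum>j<M. Polynomial.smult (x $ j) (P j))"
  have Qent: "coll_Q \<tau> M $$ (m, j) = poly (P j) (\<tau> m)" if "m < M" "j < M" for m j
  proof -
    have "coll_Q \<tau> M $$ (m, j) = integral {0..\<tau> m} (poly (lp \<tau> M j))"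
      using that unfolding coll_Q_def poly_lp by simp
    also have "\<dots> = poly (P j) (\<tau> m)"
      using integral_poly[OF P(1), of 0 "\<tau> m"] tpos[OF that(1)] P(2) by simp
    finally show ?thesis .
  qed
  have roots: "poly PP (\<tau> m) = 0" if m: "m < M" for m
  proof -
    have "poly PP (\<tau> m) = (\<Sum>j<M. coll_Q \<tau> M $$ (m, j) * x $ j)"
      unfolding PP_def poly_sum using m by (auto simp: Qent mult.commute intro!: sum.cong)
    also have "\<dots> = (coll_Q \<tau> M *\<^sub>v x) $ m"
      using Qc x m by (simp add: mult_mat_vec_index[OF Qc x m])
    also have "\<dots> = 0" using Qx m by simp
    finally show ?thesis .
  qed
  have root0: "poly PP 0 = 0" unfolding PP_def poly_sum using P(2) by simp
  have degPP: "degree PP \<le> M"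
    unfolding PP_def
  proof (intro degree_sum_le)
    fix j assume j: "j \<in> {..<M}"
    have "degree (P j) \<le> M" using P(3)[of j] degree_lp'[of j M \<tau>] j M by simp
    then show "degree (Polynomial.smult (x $ j) (P j)) \<le> M"
      using degree_smult_le order.trans by blast
  qed simp
  have PP0: "PP = 0"
  proof (rule ccontr)
    assume nz: "PP \<noteq> 0"
    have sub: "insert 0 (\<tau> ` {..<M}) \<subseteq> {z. poly PP z = 0}" using roots root0 by auto
    have "card (insert 0 (\<tau> ` {..<M})) = M + 1"
    proof -
      have "0 \<notin> \<tau> ` {..<M}" using tpos by force
      then show ?thesis using card_image[OF inj] by simp
    qed
    moreover have "card (insert 0 (\<tau> ` {..<M})) \<le> card {z. poly PP z = 0}"
      using card_mono[OF poly_roots_finite[OF nz] sub] .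
    moreover have "card {z. poly PP z = 0} \<le> degree PP" by (rule card_poly_roots_bound[OF nz])
    ultimately show False using degPP by simp
  qed
  have "pderiv PP = (\<Sum>j<M. Polynomial.smult (x $ j) (lp \<tau> M j))"
    unfolding PP_def pderiv_sum' pderiv_smult P(1) ..
  then have sum0: "(\<Sum>j<M. Polynomial.smult (x $ j) (lp \<tau> M j)) = 0" using PP0 by simp
  show "x = 0\<^sub>v M"
  proof (rule eq_vecI)
    fix k assume "k < dim_vec (0\<^sub>v M :: real vec)"
    then have k: "k < M" by simp
    have "0 = poly (\<Sum>j<M. Polynomial.smult (x $ j) (lp \<tau> M j)) (\<tau> k)" using sum0 by simp
    also have "\<dots> = (\<Sum>j<M. x $ j * (if j = k then 1 else 0))"
      unfolding poly_sum poly_smult poly_lp using lagrange_at_node[OF inj _ k] by (intro sum.cong) auto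
    also have "\<dots> = x $ k" using k by (simp add: if_distrib cong: if_cong)
    finally show "x $ k = 0\<^sub>v M $ k" using k by simp
  qed (use x in simp)
qed





theorem lemma3:
  fixes L M N Mt Nt :: nat
    and \<tau> :: "nat \<Rightarrow> real"
    and Qd :: "real mat"
    and A At :: "complex mat"
    and TFQ TFA TCQ TCA :: "real mat"
    and \<nu> :: "complex vec \<Rightarrow> real"
  assumes "0 < L" "0 < M" "0 < N" "0 < Mt" "0 < Nt" "Mt \<le> M" "Nt \<le> N"
    and "right_radau_nodes M \<tau>"
    and "Qd \<in> carrier_mat Mt Mt" "\<forall>i j. i < j \<longrightarrow> j < Mt \<longrightarrow> Qd $$ (i, j) = 0" "invertible_mat Qd"
    and "A \<in> carrier_mat N N" "invertible_mat A"
    and "At \<in> carrier_mat Nt Nt" "invertible_mat At"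
    and "TFQ \<in> carrier_mat Mt M" "TFA \<in> carrier_mat Nt N"
    and "TCQ \<in> carrier_mat M Mt" "TCA \<in> carrier_mat N Nt"
    and "kron (kron (subdiag L) (lastcol_ones Mt)) (1\<^sub>m Nt) * kron (kron (1\<^sub>m L) (cmat TFQ)) (cmat TFA)
         = kron (kron (1\<^sub>m L) (cmat TFQ)) (cmat TFA) * kron (kron (subdiag L) (lastcol_ones M)) (1\<^sub>m N)"
    and "is_vec_norm (L * M * N) \<nu>"
  shows "\<exists>\<mu>s>0. \<exists>c>0. \<forall>\<mu>\<ge>\<mu>s.
     invertible_mat (sys_mat L (coll_Q \<tau> M) A \<mu>) \<and> invertible_mat (sys_mat L Qd At \<mu>) \<and>
     induced_norm \<nu> (minv (sys_mat L (coll_Q \<tau> M) A \<mu>)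
        - kron (kron (1\<^sub>m L) (cmat TCQ)) (cmat TCA) * minv (sys_mat L Qd At \<mu>)
          * kron (kron (1\<^sub>m L) (cmat TFQ)) (cmat TFA)) \<le> c / \<mu>"
proof -
  let ?n = "L * M * N" and ?nt = "L * Mt * Nt"
  let ?Q = "coll_Q \<tau> M"
  have rad: "strict_mono_on {..<M} \<tau>" "0 < \<tau> 0" using assms(8) unfolding right_radau_nodes_def by auto
  have Qc: "?Q \<in> carrier_mat M M" unfolding coll_Q_def by simp
  have Qinv: "invertible_mat (cmat ?Q)"
    using cmat_invertible[OF coll_Q_invertible[OF assms(2) rad] Qc] .
  have dimQ: "dim_row ?Q = M" using Qc by simp
  define KF where "KF = kron (kron (1\<^sub>m L) (cmat ?Q)) A"
  define SF :: "complex mat" where "SF = kron (kron (subdiag L) (lastcol_ones M)) (1\<^sub>m N)"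
  define KC where "KC = kron (kron (1\<^sub>m L) (cmat Qd)) At"
  define SC :: "complex mat" where "SC = kron (kron (subdiag L) (lastcol_ones Mt)) (1\<^sub>m Nt)"
  define TC where "TC = kron (kron (1\<^sub>m L) (cmat TCQ)) (cmat TCA)"
  define TF where "TF = kron (kron (1\<^sub>m L) (cmat TFQ)) (cmat TFA)"
  have sub: "(subdiag L :: complex mat) \<in> carrier_mat L L" unfolding subdiag_def by simp
  have lcM: "(lastcol_ones M :: complex mat) \<in> carrier_mat M M" "(lastcol_ones Mt :: complex mat) \<in> carrier_mat Mt Mt"
    unfolding lastcol_ones_def by auto
  have KFc: "KF \<in> carrier_mat ?n ?n" unfolding KF_def using Qc assms(12) by simp
  have SFc: "SF \<in> carrier_mat ?n ?n" unfolding SF_def using sub lcM by simp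
  have KCc: "KC \<in> carrier_mat ?nt ?nt" unfolding KC_def using assms(9,14) by simp
  have SCc: "SC \<in> carrier_mat ?nt ?nt" unfolding SC_def using sub lcM by simp
  have TCc: "TC \<in> carrier_mat ?n ?nt" unfolding TC_def using assms(18,19) by simp
  have TFc: "TF \<in> carrier_mat ?nt ?n" unfolding TF_def using assms(16,17) by simp
  have KFi: "invertible_mat KF" unfolding KF_def
    using kron3_invertible[of "cmat ?Q" M A N L] Qc Qinv assms(12,13) by simp
  have KCi: "invertible_mat KC" unfolding KC_def
    using kron3_invertible[of "cmat Qd" Mt At Nt L] cmat_invertible[OF assms(11,9)] assms(9,14,15) by simp
  have RFc: "1\<^sub>m ?n - SF \<in> carrier_mat ?n ?n" using SFc by (intro minus_carrier_mat)
  have RCc: "1\<^sub>m ?nt - SC \<in> carrier_mat ?nt ?nt" using SCc by (intro minus_carrier_mat)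
  have sysF: "sys_mat L ?Q A \<mu> = (1\<^sub>m ?n - SF) - complex_of_real \<mu> \<cdot>\<^sub>m KF" for \<mu>
  proof -
    have dA: "dim_row A = N" using assms(12) by simp
    show ?thesis
      unfolding sys_mat_def Let_def dimQ dA KF_def[symmetric] SF_def[symmetric] using KFc SFc
      by (intro eq_matI) auto
  qed
  have sysC: "sys_mat L Qd At \<mu> = (1\<^sub>m ?nt - SC) - complex_of_real \<mu> \<cdot>\<^sub>m KC" for \<mu>
  proof -
    have dA: "dim_row At = Nt" "dim_row Qd = Mt" using assms(9,14) by auto
    show ?thesis
      unfolding sys_mat_def Let_def dA KC_def[symmetric] SC_def[symmetric] using KCc SCc
      by (intro eq_matI) auto
  qed
  obtain \<mu>1 c1 where mu1: "\<mu>1 > 0" "c1 > 0" and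
    F: "\<And>\<mu>. \<mu> \<ge> \<mu>1 \<Longrightarrow> invertible_mat ((1\<^sub>m ?n - SF) - complex_of_real \<mu> \<cdot>\<^sub>m KF) \<and>
       (\<forall>y\<in>carrier_vec ?n. \<nu> (minv ((1\<^sub>m ?n - SF) - complex_of_real \<mu> \<cdot>\<^sub>m KF) *\<^sub>v y) \<le> c1 / \<mu> * \<nu> y)"
    using inv_bound[OF assms(21) KFc KFi RFc] by blast
  obtain \<mu>2 c2 where mu2: "\<mu>2 > 0" "c2 > 0" and
    C: "\<And>\<mu>. \<mu> \<ge> \<mu>2 \<Longrightarrow> invertible_mat ((1\<^sub>m ?nt - SC) - complex_of_real \<mu> \<cdot>\<^sub>m KC) \<and>
       (\<forall>y\<in>carrier_vec ?nt. norm1 (minv ((1\<^sub>m ?nt - SC) - complex_of_real \<mu> \<cdot>\<^sub>m KC) *\<^sub>v y) \<le> c2 / \<mu> * norm1 y)"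
    using inv_bound[OF is_vec_norm_norm1 KCc KCi RCc] by blast
  obtain t1 where t1: "t1 \<ge> 0" "\<forall>z\<in>carrier_vec ?nt. \<nu> (TC *\<^sub>v z) \<le> t1 * norm1 z"
    using mat_bound[OF is_vec_norm_norm1 assms(21) TCc] by blast
  obtain t2 where t2: "t2 \<ge> 0" "\<forall>y\<in>carrier_vec ?n. norm1 (TF *\<^sub>v y) \<le> t2 * \<nu> y"
    using mat_bound[OF assms(21) is_vec_norm_norm1 TFc] by blast
  define c where "c = c1 + t1 * c2 * t2"
  have cpos: "c > 0" unfolding c_def using mu1 mu2 t1 t2 by (simp add: add_pos_nonneg)
  have npos: "?n > 0" using assms(1,2,3) by simp
  show ?thesis
  proof (rule exI[of _ "max \<mu>1 \<mu>2"], intro conjI exI[of _ c] cpos allI impI)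
    show "0 < max \<mu>1 \<mu>2" using mu1 by simp
    fix \<mu> :: real assume mu: "max \<mu>1 \<mu>2 \<le> \<mu>"
    have mpos: "\<mu> > 0" using mu mu1 by simp
    note F' = F[of \<mu>] and C' = C[of \<mu>]
    have Fi: "invertible_mat (sys_mat L ?Q A \<mu>)" using F' mu unfolding sysF by simp
    have Ci: "invertible_mat (sys_mat L Qd At \<mu>)" using C' mu unfolding sysC by simp
    show "invertible_mat (sys_mat L ?Q A \<mu>)" by (rule Fi)
    show "invertible_mat (sys_mat L Qd At \<mu>)" by (rule Ci)
    let ?CF = "sys_mat L ?Q A \<mu>" and ?CC = "sys_mat L Qd At \<mu>"
    have CFc: "?CF \<in> carrier_mat ?n ?n" unfolding sysF using RFc by (intro minus_carrier_mat) (use KFc in simp)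
    have CCc: "?CC \<in> carrier_mat ?nt ?nt" unfolding sysC using RCc by (intro minus_carrier_mat) (use KCc in simp)
    have mF: "minv ?CF \<in> carrier_mat ?n ?n" using minv[OF Fi CFc] by blast
    have mC: "minv ?CC \<in> carrier_mat ?nt ?nt" using minv[OF Ci CCc] by blast
    have bF: "\<forall>y\<in>carrier_vec ?n. \<nu> (minv ?CF *\<^sub>v y) \<le> c1 / \<mu> * \<nu> y" using F' mu unfolding sysF by simp
    have bC: "\<forall>y\<in>carrier_vec ?nt. norm1 (minv ?CC *\<^sub>v y) \<le> c2 / \<mu> * norm1 y" using C' mu unfolding sysC by simp
    define B where "B = minv ?CF - TC * minv ?CC * TF"
    have TPT: "TC * minv ?CC * TF \<in> carrier_mat ?n ?n" using TCc mC TFc by simp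
    have Bc: "B \<in> carrier_mat ?n ?n" unfolding B_def using TPT by (intro minus_carrier_mat)
    have key: "\<nu> (B *\<^sub>v x) / \<nu> x \<le> c / \<mu>" if x: "x \<in> carrier_vec ?n" "x \<noteq> 0\<^sub>v ?n" for x
    proof -
      have nx: "\<nu> x > 0" using nu_nonneg[OF assms(21) x(1)] nu_eq0[OF assms(21) x(1)] x(2) by linarith
      have Tx: "TF *\<^sub>v x \<in> carrier_vec ?nt" using TFc x by simp
      have PTx: "minv ?CC *\<^sub>v (TF *\<^sub>v x) \<in> carrier_vec ?nt" using mC Tx by simp
      have TmC: "TC * minv ?CC \<in> carrier_mat ?n ?nt" using TCc mC by simp
      have "B *\<^sub>v x = minv ?CF *\<^sub>v x - (TC * minv ?CC * TF) *\<^sub>v x"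
        unfolding B_def by (rule minus_mult_distrib_mat_vec[OF mF TPT x(1)])
      also have "(TC * minv ?CC * TF) *\<^sub>v x = (TC * minv ?CC) *\<^sub>v (TF *\<^sub>v x)"
        by (rule assoc_mult_mat_vec[OF TmC TFc x(1)])
      also have "(TC * minv ?CC) *\<^sub>v (TF *\<^sub>v x) = TC *\<^sub>v (minv ?CC *\<^sub>v (TF *\<^sub>v x))"
        by (rule assoc_mult_mat_vec[OF TCc mC Tx])
      finally have eq: "B *\<^sub>v x = minv ?CF *\<^sub>v x - TC *\<^sub>v (minv ?CC *\<^sub>v (TF *\<^sub>v x))" .
      have "\<nu> (B *\<^sub>v x) \<le> \<nu> (minv ?CF *\<^sub>v x) + \<nu> (TC *\<^sub>v (minv ?CC *\<^sub>v (TF *\<^sub>v x)))"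
        unfolding eq using mF x TCc PTx by (intro nu_diff[OF assms(21)]) auto
      also have "\<dots> \<le> c1 / \<mu> * \<nu> x + t1 * norm1 (minv ?CC *\<^sub>v (TF *\<^sub>v x))"
        using bF x t1 PTx by (intro add_mono) auto
      also have "\<dots> \<le> c1 / \<mu> * \<nu> x + t1 * (c2 / \<mu> * norm1 (TF *\<^sub>v x))"
        using bC Tx t1 by (intro add_left_mono mult_left_mono) auto
      also have "\<dots> \<le> c1 / \<mu> * \<nu> x + t1 * (c2 / \<mu> * (t2 * \<nu> x))"
        using t2 x t1 mu2 mpos by (intro add_left_mono mult_left_mono) auto
      also have "\<dots> = c / \<mu> * \<nu> x" unfolding c_def by (simp add: field_simps add_divide_distrib)
      finally have "\<nu> (B *\<^sub>v x) \<le> c / \<mu> * \<nu> x" .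
      then show ?thesis using nx by (simp only: pos_divide_le_eq[OF nx])
    qed
    have dimB: "dim_col B = ?n" by (rule carrier_matD(2)[OF Bc])
    have u: "unit_vec ?n 0 \<in> carrier_vec ?n" by simp
    have u0: "unit_vec ?n 0 \<noteq> (0\<^sub>v ?n :: complex vec)"
    proof
      assume "unit_vec ?n 0 = (0\<^sub>v ?n :: complex vec)"
      then have "unit_vec ?n 0 $ 0 = (0\<^sub>v ?n :: complex vec) $ 0" by simp
      then show False using npos by simp
    qed
    have ne: "{\<nu> (B *\<^sub>v x) / \<nu> x |x. x \<in> carrier_vec (dim_col B) \<and> x \<noteq> 0\<^sub>v (dim_col B)} \<noteq> {}"
      unfolding dimB using u u0 by blast
    have "Sup {\<nu> (B *\<^sub>v x) / \<nu> x |x. x \<in> carrier_vec (dim_col B) \<and> x \<noteq> 0\<^sub>v (dim_col B)} \<le> c / \<mu>"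
    proof (rule cSup_least[OF ne])
      fix y assume "y \<in> {\<nu> (B *\<^sub>v x) / \<nu> x |x. x \<in> carrier_vec (dim_col B) \<and> x \<noteq> 0\<^sub>v (dim_col B)}"
      then obtain x where y: "y = \<nu> (B *\<^sub>v x) / \<nu> x" and x: "x \<in> carrier_vec ?n" "x \<noteq> 0\<^sub>v ?n"
        unfolding dimB by blast
      show "y \<le> c / \<mu>" unfolding y by (rule key[OF x])
    qed
    then show "induced_norm \<nu> (minv ?CF - kron (kron (1\<^sub>m L) (cmat TCQ)) (cmat TCA) * minv ?CC *
          kron (kron (1\<^sub>m L) (cmat TFQ)) (cmat TFA)) \<le> c / \<mu>"
      unfolding TC_def[symmetric] TF_def[symmetric] B_def[symmetric] induced_norm_def .
  qed
qed



end
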